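(* In the EnSolver setting described in the context (ensemble of $M$ base models, output domain of size $N_{\mathcal{S}}$, threshold $\tau$ with $M(1-\tau)$ a positive integer, and assumptions of independence and (A1)–(A3)), the skip rate of the EnSolver $m$ satisfies $$p\left( m(x) = s_{\text{skip}} \right) > \alpha \sum_{i=0}^{k-1}\binom{M}{i}\beta_{\text{min}}^i (1-\beta_{\text{max}})^{M-i} + (1-\alpha) - \frac{N_{\mathcal{S}}-\alpha}{N_{\mathcal{S}}-1}\, \mathcal{E}(M, N_{\mathcal{S}}, \tau),$$ where $k = M(1-\tau) + 1$ and $x \sim p$.
   Context: Setting: $\mathcal{S}$ is a finite set of output strings with $N_{\mathcal{S}} = |\mathcal{S}| \ge 2$; inputs $x \in \mathcal{X}$ are drawn from a probability distribution $p$ on $\mathcal{X}$, each $x$ having a single correct output $s_x \in \mathcal{S}$. $\mathcal{X}$ is the disjoint union of the in-distribution set $\mathcal{X}^{\text{in}}$ and the out-of-distribution set $\mathcal{X}^{\text{out}}$, and $\alpha = p(x \in \mathcal{X}^{\text{in}})$. An ensemble consists of $M$ base models $m_1, \dots, m_M$, each of which produces a (random) prediction $m_i(x) \in \mathcal{S}$ on input $x$; probabilities are taken jointly over $x \sim p$ and the predictions, and the base models make their predictions independently of each other given the input (in particular conditionally on $x \in \mathcal{X}^{\text{in}}$ and conditionally on $x \in \mathcal{X}^{\text{out}}$). Let $\beta_i = p(m_i(x) = s_x \mid x \in \mathcal{X}^{\text{in}})$, $\beta_{\text{min}} = \min_i \beta_i$, $\beta_{\text{max}} = \max_i \beta_i$.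 Assumptions: (A1) $\beta_{\text{min}} > 1/N_{\mathcal{S}}$; (A2) for each $i$, conditionally on $x \in \mathcal{X}^{\text{in}}$, $m_i(x)$ equals each incorrect string $s \neq s_x$ with probability $(1-\beta_i)/(N_{\mathcal{S}}-1)$; (A3) for each $i$, conditionally on $x \in \mathcal{X}^{\text{out}}$, $m_i(x)$ equals each $s \in \mathcal{S}$ with probability $1/N_{\mathcal{S}}$. For $x$ and $s \in \mathcal{S}$, $n(x,s)$ is the number of base models with $m_i(x) = s$. The threshold $\tau \in (0,1]$ is such that $M(1-\tau)$ is a positive integer. The EnSolver $m$ acts as follows on input $x$: let $p_{\max} = \max_{s} n(x,s)/M$ and uncertainty $u = 1 - p_{\max}$; if $u < \tau$ it outputs a string $y$ maximizing $n(x,\cdot)$, otherwise it outputs a special skip symbol $s_{\text{skip}}$. The out-of-distribution error bound is $\mathcal{E}(M, N_{\mathcal{S}}, \tau) = \binom{M}{\lfloor M/2 \rfloor} (N_{\mathcal{S}})^{-M(1-\tau)}$. *)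

theory Defs
  imports "HOL-Probability.Probability"
begin

text \<open>Given the input x, model i predicts according to the pmf mdl i x, and the
  models predict independently of each other given the input (product pmf).\<close>
definition joint :: "'x pmf \<Rightarrow> (nat \<Rightarrow> 'x \<Rightarrow> 's pmf) \<Rightarrow> nat \<Rightarrow> ('x \<times> (nat \<Rightarrow> 's)) pmf" where
  "joint p mdl M =
     bind_pmf p (\<lambda>x. map_pmf (\<lambda>\<omega>. (x, \<omega>)) (Pi_pmf {..<M} undefined (\<lambda>i. mdl i x)))"

definition cnt :: "nat \<Rightarrow> (nat \<Rightarrow> 's) \<Rightarrow> 's \<Rightarrow> nat" where
  "cnt M \<omega> s = card {i. i < M \<and> \<omega> i = s}"

definition pmax :: "'s set \<Rightarrow> nat \<Rightarrow> (nat \<Rightarrow> 's) \<Rightarrow> real" where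
  "pmax S M \<omega> = Max ((\<lambda>s. real (cnt M \<omega> s) / real M) ` S)"

text \<open>EnSolver output: Some y (a majority string) or None (= the skip symbol).\<close>
definition ensolver :: "'s set \<Rightarrow> nat \<Rightarrow> real \<Rightarrow> (nat \<Rightarrow> 's) \<Rightarrow> 's option" where
  "ensolver S M \<tau> \<omega> =
     (if 1 - pmax S M \<omega> < \<tau>
      then Some (SOME y. y \<in> S \<and> (\<forall>s\<in>S. cnt M \<omega> s \<le> cnt M \<omega> y))
      else None)"

definition beta :: "'x pmf \<Rightarrow> (nat \<Rightarrow> 'x \<Rightarrow> 's pmf) \<Rightarrow> nat \<Rightarrow> 'x set \<Rightarrow> ('x \<Rightarrow> 's) \<Rightarrow> nat \<Rightarrow> real" where
  "beta p mdl M Xin sx i =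
     measure_pmf.prob (joint p mdl M) {z. fst z \<in> Xin \<and> snd z i = sx (fst z)}
     / measure_pmf.prob (joint p mdl M) {z. fst z \<in> Xin}"

definition err_bound :: "nat \<Rightarrow> nat \<Rightarrow> real \<Rightarrow> real" where
  "err_bound M N \<tau> = real (M choose (M div 2)) * real N powr (- (real M * (1 - \<tau>)))"

end

theory Submission
  imports Defs
begin

lemma prob_bind_pmf:
  "measure_pmf.prob (bind_pmf p f) A = measure_pmf.expectation p (\<lambda>x. measure_pmf.prob (f x) A)"
proof -
  have int: "integrable (measure_pmf p) (\<lambda>x. measure_pmf.prob (f x) A)"
    by (intro measure_pmf.integrable_const_bound[where B=1]) auto
  have "emeasure (measure_pmf (bind_pmf p f)) A = (\<integral>\<^sup>+x. emeasure (measure_pmf (f x)) A \<partial>p)" by simp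
  also have "\<dots> = (\<integral>\<^sup>+x. ennreal (measure_pmf.prob (f x) A) \<partial>p)"
    by (simp add: measure_pmf.emeasure_eq_measure)
  also have "\<dots> = ennreal (measure_pmf.expectation p (\<lambda>x. measure_pmf.prob (f x) A))"
    by (intro nn_integral_eq_integral int) auto
  finally show ?thesis
    by (simp add: measure_pmf.emeasure_eq_measure integral_nonneg)
qed

lemma cnt_ge_bound:
  fixes P :: "nat \<Rightarrow> 's pmf"
  assumes q: "\<And>i. i < M \<Longrightarrow> pmf (P i) s \<le> q"
  shows "measure_pmf.prob (Pi_pmf {..<M} d P) {\<omega>. k \<le> cnt M \<omega> s} \<le> real (M choose k) * q ^ k"
proof -
  define F where "F = {T. T \<subseteq> {..<M} \<and> card T = k}"
  define E where "E = (\<lambda>T. Pi {..<M} (\<lambda>i. if i \<in> T then {s} else UNIV))"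
  let ?Q = "Pi_pmf {..<M} d P"
  have finF: "finite F" unfolding F_def by auto
  have sub: "{\<omega>. k \<le> cnt M \<omega> s} \<subseteq> (\<Union>T\<in>F. E T)"
  proof
    fix \<omega> assume "\<omega> \<in> {\<omega>. k \<le> cnt M \<omega> s}"
    then have "k \<le> card {i. i < M \<and> \<omega> i = s}" by (simp add: cnt_def)
    then obtain T where T: "T \<subseteq> {i. i < M \<and> \<omega> i = s}" "card T = k"
      using obtain_subset_with_card_n by metis
    then have "T \<in> F" "\<omega> \<in> E T" unfolding F_def E_def by auto
    then show "\<omega> \<in> (\<Union>T\<in>F. E T)" by blast
  qed
  have "measure_pmf.prob ?Q {\<omega>. k \<le> cnt M \<omega> s} \<le> measure_pmf.prob ?Q (\<Union>T\<in>F. E T)"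
    by (rule measure_pmf.finite_measure_mono) (use sub in auto)
  also have "\<dots> \<le> (\<Sum>T\<in>F. measure_pmf.prob ?Q (E T))"
    by (rule measure_pmf.finite_measure_subadditive_finite) (use finF in auto)
  also have "\<dots> \<le> (\<Sum>T\<in>F. q ^ k)"
  proof (rule sum_mono)
    fix T assume T: "T \<in> F"
    have "measure_pmf.prob ?Q (E T) = (\<Prod>i\<in>{..<M}. measure_pmf.prob (P i) (if i \<in> T then {s} else UNIV))"
      unfolding E_def by (rule measure_Pi_pmf_Pi) simp
    also have "\<dots> = (\<Prod>i\<in>{..<M}. if i \<in> T then pmf (P i) s else 1)"
      by (intro prod.cong) (auto simp: measure_pmf_single)
    also have "\<dots> = (\<Prod>i\<in>T. pmf (P i) s)"
      using T unfolding F_def by (subst prod.If_cases) (auto simp: Int_absorb1 Int_absorb2)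
    also have "\<dots> \<le> (\<Prod>i\<in>T. q)"
      using T q unfolding F_def by (intro prod_mono) auto
    also have "\<dots> = q ^ k" using T unfolding F_def by simp
    finally show "measure_pmf.prob ?Q (E T) \<le> q ^ k" .
  qed
  also have "\<dots> = real (M choose k) * q ^ k"
    unfolding F_def using n_subsets[of "{..<M}" k] by simp
  finally show ?thesis .
qed

lemma cnt_le_bound:
  fixes P :: "nat \<Rightarrow> 's pmf"
  assumes b: "\<And>i. i < M \<Longrightarrow> pmf (P i) s = b i"
    and bmin: "\<And>i. i < M \<Longrightarrow> bmin \<le> b i" and bmax: "\<And>i. i < M \<Longrightarrow> b i \<le> bmax"
    and bmin0: "0 \<le> bmin" and bmax1: "bmax \<le> 1"
  shows "(\<Sum>j\<in>{..<K+1}. real (M choose j) * bmin ^ j * (1 - bmax) ^ (M - j))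
    \<le> measure_pmf.prob (Pi_pmf {..<M} d P) {\<omega>. cnt M \<omega> s \<le> K}"
proof -
  define F where "F = {T. T \<subseteq> {..<M} \<and> card T \<le> K}"
  define E where "E = (\<lambda>T. Pi {..<M} (\<lambda>i. if i \<in> T then {s} else -{s}))"
  define g where "g = (\<lambda>j. bmin ^ j * (1 - bmax) ^ (M - j))"
  let ?Q = "Pi_pmf {..<M} d P"
  have finF: "finite F" unfolding F_def by auto
  have ET: "{i. i < M \<and> \<omega> i = s} = T" if "\<omega> \<in> E T" "T \<subseteq> {..<M}" for \<omega> T
  proof (intro set_eqI iffI)
    fix i assume "i \<in> {i. i < M \<and> \<omega> i = s}"
    then have "i < M" "\<omega> i = s" by auto
    moreover have "\<omega> i \<in> (if i \<in> T then {s} else -{s})" by (rule Pi_mem[OF that(1)[unfolded E_def]]) (use \<open>i < M\<close> in simp)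
    ultimately show "i \<in> T" by (cases "i \<in> T") auto
  next
    fix i assume "i \<in> T"
    moreover have "i < M" using \<open>i \<in> T\<close> that(2) by auto
    moreover have "\<omega> i \<in> (if i \<in> T then {s} else -{s})" by (rule Pi_mem[OF that(1)[unfolded E_def]]) (use \<open>i < M\<close> in simp)
    ultimately show "i \<in> {i. i < M \<and> \<omega> i = s}" by auto
  qed
  have sub: "(\<Union>T\<in>F. E T) \<subseteq> {\<omega>. cnt M \<omega> s \<le> K}"
  proof
    fix \<omega> assume "\<omega> \<in> (\<Union>T\<in>F. E T)"
    then obtain T where "T \<in> F" "\<omega> \<in> E T" by blast
    then show "\<omega> \<in> {\<omega>. cnt M \<omega> s \<le> K}" using ET[of \<omega> T] unfolding F_def cnt_def by auto
  qed
  have disj: "disjoint_family_on E F"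
    unfolding disjoint_family_on_def
  proof (intro ballI impI)
    fix T T' assume "T \<in> F" "T' \<in> F" "T \<noteq> T'"
    then show "E T \<inter> E T' = {}" using ET[of _ T] ET[of _ T'] unfolding F_def by blast
  qed
  have "(\<Sum>j\<in>{..<K+1}. real (M choose j) * bmin ^ j * (1 - bmax) ^ (M - j))
      = (\<Sum>j\<in>{..<K+1}. (\<Sum>T\<in>{T\<in>F. card T = j}. g (card T)))"
  proof (rule sum.cong[OF refl])
    fix j assume j: "j \<in> {..<K+1}"
    have "{T\<in>F. card T = j} = {T. T \<subseteq> {..<M} \<and> card T = j}" using j unfolding F_def by auto
    then have hh: "(\<Sum>T\<in>{T\<in>F. card T = j}. g (card T)) = real (M choose j) * g j"
      using n_subsets[of "{..<M}" j] by simp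
    then show "real (M choose j) * bmin ^ j * (1 - bmax) ^ (M - j) = (\<Sum>T\<in>{T\<in>F. card T = j}. g (card T))"
      unfolding hh g_def by (simp only: mult.assoc)
  qed
  also have "\<dots> = (\<Sum>T\<in>F. g (card T))"
    by (rule sum.group) (use finF in \<open>auto simp: F_def\<close>)
  also have "\<dots> \<le> (\<Sum>T\<in>F. measure_pmf.prob ?Q (E T))"
  proof (rule sum_mono)
    fix T assume T: "T \<in> F"
    then have TM: "T \<subseteq> {..<M}" unfolding F_def by auto
    have "g (card T) = (\<Prod>i\<in>T. bmin) * (\<Prod>i\<in>{..<M} \<inter> - T. 1 - bmax)"
    proof -
      have "card ({..<M} \<inter> - T) = M - card T"
        using TM by (metis Diff_eq card_Diff_subset card_lessThan finite_subset finite_lessThan)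
      then show ?thesis unfolding g_def by simp
    qed
    also have "\<dots> \<le> (\<Prod>i\<in>T. b i) * (\<Prod>i\<in>{..<M} \<inter> - T. 1 - b i)"
      using TM bmin bmax bmin0 bmax1
      by (intro mult_mono prod_mono prod_nonneg) (auto intro: order.trans)
    also have "\<dots> = (\<Prod>i\<in>{..<M}. if i \<in> T then b i else 1 - b i)"
      using TM by (subst prod.If_cases) (auto simp: Int_absorb1 Int_absorb2)
    also have "\<dots> = (\<Prod>i\<in>{..<M}. measure_pmf.prob (P i) (if i \<in> T then {s} else -{s}))"
    proof (intro prod.cong refl)
      fix i assume i: "i \<in> {..<M}"
      have "measure_pmf.prob (P i) (-{s}) = 1 - pmf (P i) s"
        using measure_pmf.prob_compl[of "{s}" "P i"] by (simp add: measure_pmf_single Compl_eq_Diff_UNIV)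
      then show "(if i \<in> T then b i else 1 - b i) = measure_pmf.prob (P i) (if i \<in> T then {s} else -{s})"
        using b[of i] i by (auto simp: measure_pmf_single)
    qed
    also have "\<dots> = measure_pmf.prob ?Q (E T)"
      unfolding E_def by (rule measure_Pi_pmf_Pi[symmetric]) simp
    finally show "g (card T) \<le> measure_pmf.prob ?Q (E T)" .
  qed
  also have "\<dots> = measure_pmf.prob ?Q (\<Union>T\<in>F. E T)"
    by (rule measure_pmf.finite_measure_finite_Union[symmetric]) (use finF disj in auto)
  also have "\<dots> \<le> measure_pmf.prob ?Q {\<omega>. cnt M \<omega> s \<le> K}"
    by (rule measure_pmf.finite_measure_mono) (use sub in auto)
  finally show ?thesis .
qed

theorem lemma4:
  fixes p :: "'x pmf" and Xin :: "'x set" and sx :: "'x \<Rightarrow> 's"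
    and S :: "'s set" and mdl :: "nat \<Rightarrow> 'x \<Rightarrow> 's pmf"
    and M K :: nat and \<tau> :: real
  defines "N \<equiv> card S"
      and "\<alpha> \<equiv> measure_pmf.prob p Xin"
      and "\<beta> \<equiv> beta p mdl M Xin sx"
  defines "\<beta>min \<equiv> Min (\<beta> ` {..<M})"
      and "\<beta>max \<equiv> Max (\<beta> ` {..<M})"
  assumes finS: "finite S" and N2: "N \<ge> 2"
    and sx_S: "\<And>x. sx x \<in> S"
    and pred_S: "\<And>i x. i < M \<Longrightarrow> set_pmf (mdl i x) \<subseteq> S"
    and tau: "0 < \<tau>" "\<tau> \<le> 1"
    and K: "K > 0" "real K = real M * (1 - \<tau>)"
    and A1: "\<beta>min > 1 / real N"
    and A2: "\<And>i x s. i < M \<Longrightarrow> x \<in> set_pmf p \<Longrightarrow> x \<in> Xin \<Longrightarrow> s \<in> S \<Longrightarrow> s \<noteq> sx x \<Longrightarrow>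
               pmf (mdl i x) s = (1 - \<beta> i) / (real N - 1)"
    and A3: "\<And>i x s. i < M \<Longrightarrow> x \<in> set_pmf p \<Longrightarrow> x \<notin> Xin \<Longrightarrow> s \<in> S \<Longrightarrow>
               pmf (mdl i x) s = 1 / real N"
  shows "measure_pmf.prob (joint p mdl M) {z. ensolver S M \<tau> (snd z) = None}
     > \<alpha> * (\<Sum>i\<in>{..<K+1}. real (M choose i) * \<beta>min ^ i * (1 - \<beta>max) ^ (M - i))
       + (1 - \<alpha>) - (real N - \<alpha>) / (real N - 1) * err_bound M N \<tau>"
proof -
  have N1: "real N \<ge> 2" using N2 by simp
  have M0: "M > 0" using K by (cases "M = 0") auto
  have Sne: "S \<noteq> {}" using N2 unfolding N_def by auto
  define Q where "Q = (\<lambda>x. Pi_pmf {..<M} undefined (\<lambda>i. mdl i x))"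
  define Skip where "Skip = {\<omega>. \<forall>s\<in>S. cnt M \<omega> s \<le> K}"
  have skip_iff: "ensolver S M \<tau> \<omega> = None \<longleftrightarrow> \<omega> \<in> Skip" for \<omega>
  proof -
    have "ensolver S M \<tau> \<omega> = None \<longleftrightarrow> pmax S M \<omega> \<le> 1 - \<tau>" by (auto simp: ensolver_def)
    also have "1 - \<tau> = real K / real M" using K M0 by (simp add: field_simps)
    also have "pmax S M \<omega> \<le> real K / real M \<longleftrightarrow> (\<forall>s\<in>S. real (cnt M \<omega> s) / real M \<le> real K / real M)"
      unfolding pmax_def using finS Sne by (simp add: Max_le_iff)
    also have "\<dots> \<longleftrightarrow> \<omega> \<in> Skip" using M0 by (simp add: Skip_def divide_le_cancel)
    finally show ?thesis .
  qed
  have skipset: "{\<omega>. ensolver S M \<tau> \<omega> = None} = Skip" using skip_iff by auto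
  have main_eq: "measure_pmf.prob (joint p mdl M) {z. ensolver S M \<tau> (snd z) = None}
      = measure_pmf.expectation p (\<lambda>x. measure_pmf.prob (Q x) Skip)"
    unfolding joint_def prob_bind_pmf by (simp add: Q_def vimage_def skipset)
  define C where "C = real (M choose (K+1))"
  define q where "q = 1 / real N"
  define Sum where "Sum = (\<Sum>i\<in>{..<K+1}. real (M choose i) * \<beta>min ^ i * (1 - \<beta>max) ^ (M - i))"
  define A where "A = Sum - (real N - 1) * C * q ^ (K+1)"
  define B where "B = 1 - real N * C * q ^ (K+1)"
  have bmin_le: "\<beta>min \<le> \<beta> i" if "i < M" for i
    unfolding \<beta>min_def using that by (intro Min_le) auto
  have le_bmax: "\<beta> i \<le> \<beta>max" if "i < M" for i
    unfolding \<beta>max_def using that by (intro Max_ge) auto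
  have q0: "0 < q" using N1 by (simp add: q_def)
  have pw: "measure_pmf.prob (Q x) Skip \<ge> (if x \<in> Xin then A else B)" if x: "x \<in> set_pmf p" for x
  proof (cases "x \<in> Xin")
    case True
    have cardS: "real (card (S - {sx x})) = real N - 1"
      using finS sx_S N2 by (simp add: N_def of_nat_diff)
    have pmf_sx: "pmf (mdl i x) (sx x) = \<beta> i" if i: "i < M" for i
    proof -
      have "1 = (\<Sum>s\<in>S. pmf (mdl i x) s)" using sum_pmf_eq_1[OF finS pred_S[OF i]] by simp
      also have "\<dots> = pmf (mdl i x) (sx x) + (\<Sum>s\<in>S-{sx x}. pmf (mdl i x) s)"
        using finS sx_S by (simp add: sum.remove)
      also have "(\<Sum>s\<in>S-{sx x}. pmf (mdl i x) s) = (\<Sum>s\<in>S-{sx x}. (1 - \<beta> i) / (real N - 1))"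
        using A2 i x True by (intro sum.cong) auto
      also have "\<dots> = 1 - \<beta> i" using cardS N1 by simp
      finally show ?thesis by simp
    qed
    have bmin0: "0 \<le> \<beta>min" using A1 N1 by (smt (verit) divide_pos_pos)
    have bmax1: "\<beta>max \<le> 1"
    proof -
      have "\<beta>max \<in> \<beta> ` {..<M}" unfolding \<beta>max_def using M0 by (intro Max_in) auto
      then obtain i where "i < M" "\<beta>max = \<beta> i" by auto
      then show ?thesis using pmf_sx[of i] pmf_le_1[of "mdl i x" "sx x"] by simp
    qed
    have low: "Sum \<le> measure_pmf.prob (Q x) {\<omega>. cnt M \<omega> (sx x) \<le> K}"
      unfolding Sum_def Q_def
      by (rule cnt_le_bound[where b=\<beta>]) (use pmf_sx bmin_le le_bmax bmin0 bmax1 in auto)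
    have up: "measure_pmf.prob (Q x) {\<omega>. K+1 \<le> cnt M \<omega> s} \<le> C * q^(K+1)" if s: "s \<in> S - {sx x}" for s
      unfolding Q_def C_def
    proof (rule cnt_ge_bound)
      fix i assume i: "i < M"
      have "pmf (mdl i x) s = (1 - \<beta> i) / (real N - 1)" using A2 i x True s by auto
      also have "\<dots> \<le> q"
      proof -
        have "1 / real N < \<beta> i" using A1 bmin_le[OF i] by simp
        then have "1 < real N * \<beta> i" using N1 by (simp add: field_simps)
        then show ?thesis unfolding q_def using N1 by (simp add: field_simps)
      qed
      finally show "pmf (mdl i x) s \<le> q" .
    qed
    let ?U = "\<Union>s\<in>S-{sx x}. {\<omega>. K+1 \<le> cnt M \<omega> s}"
    have "{\<omega>. cnt M \<omega> (sx x) \<le> K} \<subseteq> Skip \<union> ?U"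
    proof
      fix \<omega> assume h: "\<omega> \<in> {\<omega>. cnt M \<omega> (sx x) \<le> K}"
      show "\<omega> \<in> Skip \<union> ?U"
      proof (cases "\<omega> \<in> Skip")
        case False
        then obtain s where s: "s \<in> S" "\<not> cnt M \<omega> s \<le> K" unfolding Skip_def by blast
        then have "s \<noteq> sx x" using h by auto
        moreover have "\<omega> \<in> {\<omega>. K+1 \<le> cnt M \<omega> s}" using s(2) by simp
        ultimately show ?thesis using s(1) by (intro UnI2 UN_I[of s]) auto
      qed simp
    qed
    then have "measure_pmf.prob (Q x) {\<omega>. cnt M \<omega> (sx x) \<le> K} \<le> measure_pmf.prob (Q x) (Skip \<union> ?U)"
      by (rule measure_pmf.finite_measure_mono) simp
    then have "Sum \<le> measure_pmf.prob (Q x) (Skip \<union> ?U)"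
      using low by linarith
    also have "\<dots> \<le> measure_pmf.prob (Q x) Skip + measure_pmf.prob (Q x) ?U"
      by (rule measure_Un_le) auto
    also have "measure_pmf.prob (Q x) ?U \<le> (\<Sum>s\<in>S-{sx x}. measure_pmf.prob (Q x) {\<omega>. K+1 \<le> cnt M \<omega> s})"
      by (rule measure_pmf.finite_measure_subadditive_finite) (use finS in auto)
    also have "\<dots> \<le> (\<Sum>s\<in>S-{sx x}. C * q^(K+1))" by (rule sum_mono) (rule up)
    also have "\<dots> = (real N - 1) * C * q^(K+1)" using cardS by simp
    finally show ?thesis using True unfolding A_def by simp
  next
    case False
    have up: "measure_pmf.prob (Q x) {\<omega>. K+1 \<le> cnt M \<omega> s} \<le> C * q^(K+1)" if s: "s \<in> S" for s
      unfolding Q_def C_def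
    proof (rule cnt_ge_bound)
      fix i assume i: "i < M"
      show "pmf (mdl i x) s \<le> q" using A3 i x False s unfolding q_def by auto
    qed
    let ?U = "\<Union>s\<in>S. {\<omega>. K+1 \<le> cnt M \<omega> s}"
    have "UNIV \<subseteq> Skip \<union> ?U"
    proof
      fix \<omega> :: "nat \<Rightarrow> 's"
      show "\<omega> \<in> Skip \<union> ?U"
      proof (cases "\<omega> \<in> Skip")
        case False
        then obtain s where s: "s \<in> S" "\<not> cnt M \<omega> s \<le> K" unfolding Skip_def by blast
        moreover have "\<omega> \<in> {\<omega>. K+1 \<le> cnt M \<omega> s}" using s(2) by simp
        ultimately show ?thesis using s(1) by (intro UnI2 UN_I[of s]) auto
      qed simp
    qed
    then have "Skip \<union> ?U = UNIV" by (rule top_le)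
    then have "1 \<le> measure_pmf.prob (Q x) (Skip \<union> ?U)"
      using measure_pmf.prob_space[of "Q x"] by simp
    also have "\<dots> \<le> measure_pmf.prob (Q x) Skip + measure_pmf.prob (Q x) ?U"
      by (rule measure_Un_le) auto
    also have "measure_pmf.prob (Q x) ?U \<le> (\<Sum>s\<in>S. measure_pmf.prob (Q x) {\<omega>. K+1 \<le> cnt M \<omega> s})"
      by (rule measure_pmf.finite_measure_subadditive_finite) (use finS in auto)
    also have "\<dots> \<le> (\<Sum>s\<in>S. C * q^(K+1))" by (rule sum_mono) (rule up)
    also have "\<dots> = real N * C * q^(K+1)" by (simp add: N_def)
    finally show ?thesis using False unfolding B_def by simp
  qed
  have hint: "measure_pmf.expectation p (\<lambda>x. if x \<in> Xin then A else B) = \<alpha> * A + (1 - \<alpha>) * B"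
  proof -
    have intind: "integrable (measure_pmf p) (indicator Xin :: 'x \<Rightarrow> real)"
      by (rule measure_pmf.integrable_const_bound[where B=1]) auto
    have "(\<lambda>x. if x \<in> Xin then A else B) = (\<lambda>x. B + (A - B) * indicator Xin x)"
      by (auto simp: indicator_def)
    moreover have "measure_pmf.expectation p (\<lambda>x. B + (A - B) * indicator Xin x) = B + (A - B) * \<alpha>"
      unfolding \<alpha>_def using intind
      by (subst Bochner_Integration.integral_add) (auto simp: measure_pmf.prob_space)
    ultimately show ?thesis by (simp add: algebra_simps)
  qed
  have ge: "\<alpha> * A + (1 - \<alpha>) * B \<le> measure_pmf.prob (joint p mdl M) {z. ensolver S M \<tau> (snd z) = None}"
    unfolding main_eq hint[symmetric]
  proof (rule integral_mono_AE)
    show "integrable (measure_pmf p) (\<lambda>x. if x \<in> Xin then A else B)"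
      by (rule measure_pmf.integrable_const_bound[where B="\<bar>A\<bar> + \<bar>B\<bar>"]) auto
    show "integrable (measure_pmf p) (\<lambda>x. measure_pmf.prob (Q x) Skip)"
      by (rule measure_pmf.integrable_const_bound[where B=1]) auto
    show "AE x in measure_pmf p. (if x \<in> Xin then A else B) \<le> measure_pmf.prob (Q x) Skip"
      by (rule AE_pmfI) (rule pw)
  qed
  define C' where "C' = real (M choose (M div 2))"
  have CC': "C \<le> C'" unfolding C_def C'_def using binomial_maximum by simp
  have C'pos: "C' > 0" unfolding C'_def by simp
  have err: "err_bound M N \<tau> = C' * real N * q ^ (K+1)"
  proof -
    have "real N powr (- (real M * (1 - \<tau>))) = real N powr (- real K)" using K by simp
    also have "\<dots> = inverse (real N ^ K)" using N1 by (simp add: powr_minus powr_realpow)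
    also have "\<dots> = real N * q ^ (K+1)" unfolding q_def using N1 by (simp add: field_simps)
    finally show ?thesis unfolding err_bound_def C'_def by simp
  qed
  have a01: "0 \<le> \<alpha>" "\<alpha> \<le> 1" unfolding \<alpha>_def by auto
  define Z where "Z = q ^ (K+1)"
  have Z0: "Z > 0" using q0 by (simp add: Z_def)
  have key: "(real N - \<alpha>) * C * Z < (real N - \<alpha>) / (real N - 1) * (C' * real N * Z)"
  proof -
    have "C < C' * real N / (real N - 1)"
    proof -
      have "C' < C' * real N / (real N - 1)" using C'pos N1 by (simp add: field_simps)
      then show ?thesis using CC' by simp
    qed
    then have "C * Z < C' * real N / (real N - 1) * Z" using Z0 by (rule mult_strict_right_mono)
    then have "(real N - \<alpha>) * (C * Z) < (real N - \<alpha>) * (C' * real N / (real N - 1) * Z)"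
      using a01 N1 by (intro mult_strict_left_mono) auto
    then show ?thesis by (simp add: field_simps)
  qed
  have "\<alpha> * A + (1 - \<alpha>) * B = \<alpha> * Sum + (1 - \<alpha>) - (real N - \<alpha>) * C * Z"
    unfolding A_def B_def Z_def by (simp add: algebra_simps)
  moreover have "(real N - \<alpha>) / (real N - 1) * err_bound M N \<tau> = (real N - \<alpha>) / (real N - 1) * (C' * real N * Z)"
    using err unfolding Z_def by simp
  ultimately show ?thesis using ge key unfolding Sum_def by linarith
qed

end
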